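(* For each $p>1$ let $u_p\in K_p$ be a nonnegative function with $Q(u_p)=J_p$. Then $$\gamma_p:=\Big(|A|^{-1}\int_A u_p^{p+1}\Big)^{\frac1{p+1}}\to 1\quad\text{as }p\to\infty,$$ where $A=B_{R_2}\setminus B_{R_1}$.
   Context: Let $n\ge2$, $B_1\subset\mathbb{R}^n$ the open unit ball, $B_R$ the ball of radius $R$ centered at the origin, and $V(|x|)\ge0$, $V\not\equiv0$, a smooth radial function on $B_1$. Let $G$ be the Neumann Green function: for $s\in(0,1)$, $-\partial_r^2G(r,s)-\frac{n-1}{r}\partial_rG(r,s)+V(r)G(r,s)=\delta_s$ in distributions on $(0,1)$ (Dirac mass w.r.t. $dr$), $\partial_rG(0,s)=\partial_rG(1,s)=0$. Let $F(r)=|\partial B_1|\,r^{n-1}/G(r,r)$. Let $\bar r\in(0,1)$ be a local minimum point of $F$, and fix $0<R_1<\bar r<R_2<1$ such that $\bar r$ is a global minimum point of $F$ on $[R_1,R_2]$; fix $c$ with $\max\{G(R_1,\bar r)/G(\bar r,\bar r),\,G(R_2,\bar r)/G(\bar r,\bar r)\}<c<1$. Let $H^1_r(B_1)=\{u\in H^1(B_1): u \text{ radial}\}$, $Q(u)=\int_{B_1}(|\nabla u|^2+V(|x|)u^2)$, and for $p>1$ $$K_p=\Big\{u\in H^1_r(B_1):\ \Big(|B_1|^{-1}\int_{B_1}|u|^{p+1}\Big)^{\frac1{p+1}}=1,\ |u|\le c \text{ in } B_{R_1}\cup(B_1\setminus B_{R_2})\Big\},\qquad J_p=\inf\{Q(u):u\in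 K_p\}.$$ *)

theory Defs
  imports "HOL-Analysis.Analysis"
begin

fun dder :: "'a::euclidean_space list \<Rightarrow> ('a \<Rightarrow> real) \<Rightarrow> 'a \<Rightarrow> real" where
  "dder [] f = f"
| "dder (v # vs) f = (\<lambda>x. frechet_derivative (dder vs f) (at x) v)"

definition smooth_on :: "'a::euclidean_space set \<Rightarrow> ('a \<Rightarrow> real) \<Rightarrow> bool" where
  "smooth_on U f \<longleftrightarrow> (\<forall>vs. \<forall>x\<in>U. dder vs f differentiable (at x))"

definition test_fun :: "'a::euclidean_space set \<Rightarrow> ('a \<Rightarrow> real) \<Rightarrow> bool" where
  "test_fun U \<phi> \<longleftrightarrow> smooth_on U \<phi> \<and> compact (closure {x. \<phi> x \<noteq> 0})
                      \<and> closure {x. \<phi> x \<noteq> 0} \<subseteq> U"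

definition is_weak_grad ::
  "(real^'n) set \<Rightarrow> (real^'n \<Rightarrow> real) \<Rightarrow> (real^'n \<Rightarrow> real^'n) \<Rightarrow> bool" where
  "is_weak_grad U u g \<longleftrightarrow>
     (\<forall>\<phi>. test_fun U \<phi> \<longrightarrow> (\<forall>i.
        set_lebesgue_integral lebesgue U (\<lambda>x. u x * frechet_derivative \<phi> (at x) (axis i 1))
        = - set_lebesgue_integral lebesgue U (\<lambda>x. g x $ i * \<phi> x)))"

definition H1 :: "(real^'n) set \<Rightarrow> (real^'n \<Rightarrow> real) \<Rightarrow> bool" where
  "H1 U u \<longleftrightarrow> set_borel_measurable lebesgue U u
     \<and> set_integrable lebesgue U (\<lambda>x. (u x)\<^sup>2)
     \<and> (\<exists>g. set_borel_measurable lebesgue U g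
            \<and> set_integrable lebesgue U (\<lambda>x. (norm (g x))\<^sup>2)
            \<and> is_weak_grad U u g)"

definition wgrad :: "(real^'n) set \<Rightarrow> (real^'n \<Rightarrow> real) \<Rightarrow> real^'n \<Rightarrow> real^'n" where
  "wgrad U u = (SOME g. set_borel_measurable lebesgue U g
            \<and> set_integrable lebesgue U (\<lambda>x. (norm (g x))\<^sup>2) \<and> is_weak_grad U u g)"

definition H1r :: "(real^'n \<Rightarrow> real) \<Rightarrow> bool" where
  "H1r u \<longleftrightarrow> H1 (ball 0 1) u
     \<and> (\<exists>w. AE x in lebesgue. x \<in> ball 0 1 \<longrightarrow> u x = w (norm x))"

definition Qf :: "(real \<Rightarrow> real) \<Rightarrow> (real^'n \<Rightarrow> real) \<Rightarrow> real" where
  "Qf V u = set_lebesgue_integral lebesgue (ball 0 1)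
      (\<lambda>x. (norm (wgrad (ball 0 1) u x))\<^sup>2 + V (norm x) * (u x)\<^sup>2)"

definition Kp :: "real \<Rightarrow> real \<Rightarrow> real \<Rightarrow> real \<Rightarrow> (real^'n \<Rightarrow> real) set" where
  "Kp R1 R2 c p = {u. H1r u
     \<and> set_integrable lebesgue (ball 0 1) (\<lambda>x. \<bar>u x\<bar> powr (p + 1))
     \<and> (set_lebesgue_integral lebesgue (ball 0 1) (\<lambda>x. \<bar>u x\<bar> powr (p + 1))
          / measure lebesgue (ball (0::real^'n) 1)) powr (1 / (p + 1)) = 1
     \<and> (AE x in lebesgue. x \<in> ball 0 R1 \<union> (ball 0 1 - ball 0 R2) \<longrightarrow> \<bar>u x\<bar> \<le> c)}"

definition neumann_green :: "nat \<Rightarrow> (real \<Rightarrow> real) \<Rightarrow> (real \<Rightarrow> real \<Rightarrow> real) \<Rightarrow> bool" where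
  "neumann_green n V G \<longleftrightarrow> (\<forall>s\<in>{0<..<1}.
      continuous_on {0<..<1} (\<lambda>r. G r s)
    \<and> (\<forall>a b. 0 < a \<longrightarrow> b < 1 \<longrightarrow> set_integrable lborel {a..b} (\<lambda>r. G r s))
    \<and> (\<forall>\<phi>. test_fun {0<..<1} \<phi> \<longrightarrow>
          set_lebesgue_integral lborel {0<..<1}
            (\<lambda>r. G r s * (- deriv (deriv \<phi>) r + deriv (\<lambda>t. (real n - 1) / t * \<phi> t) r
                          + V r * \<phi> r)) = \<phi> s)
    \<and> ((\<lambda>r. deriv (\<lambda>t. G t s) r) \<longlongrightarrow> 0) (at_right 0)
    \<and> ((\<lambda>r. deriv (\<lambda>t. G t s) r) \<longlongrightarrow> 0) (at_left 1))"

end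

theory Submission
  imports Defs "HOL-Real_Asymp.Real_Asymp"
begin

theorem lemma3p3:
  fixes V :: "real \<Rightarrow> real" and G :: "real \<Rightarrow> real \<Rightarrow> real" and F :: "real \<Rightarrow> real"
    and rbar R1 R2 c :: real and u :: "real \<Rightarrow> real^'n \<Rightarrow> real"
  assumes n2: "CARD('n) \<ge> 2"
    and V_smooth: "smooth_on (ball 0 1) (\<lambda>x::real^'n. V (norm x))"
    and V_nonneg: "\<forall>r\<in>{0..<1}. V r \<ge> 0"
    and V_nonzero: "\<exists>r\<in>{0..<1}. V r \<noteq> 0"
    and green: "neumann_green CARD('n) V G"
    and F_def: "\<forall>r. F r = real CARD('n) * measure lebesgue (ball (0::real^'n) 1)
                           * r ^ (CARD('n) - 1) / G r r"
    and rbar: "0 < rbar" "rbar < 1"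
    and rbar_locmin: "\<exists>e>0. \<forall>r. 0 < r \<and> r < 1 \<and> \<bar>r - rbar\<bar> < e \<longrightarrow> F rbar \<le> F r"
    and R: "0 < R1" "R1 < rbar" "rbar < R2" "R2 < 1"
    and rbar_min: "\<forall>r\<in>{R1..R2}. F rbar \<le> F r"
    and c: "max (G R1 rbar / G rbar rbar) (G R2 rbar / G rbar rbar) < c" "c < 1"
    and u: "\<forall>p>1. u p \<in> Kp R1 R2 c p
                 \<and> (AE x in lebesgue. x \<in> ball 0 1 \<longrightarrow> u p x \<ge> 0)
                 \<and> Qf V (u p) = Inf (Qf V ` Kp R1 R2 c p)"
  shows "((\<lambda>p. (set_lebesgue_integral lebesgue (ball 0 R2 - ball 0 R1) (\<lambda>x. \<bar>u p x\<bar> powr (p + 1))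
               / measure lebesgue (ball (0::real^'n) R2 - ball 0 R1)) powr (1 / (p + 1)))
          \<longlongrightarrow> 1) at_top"
proof -
  define m1 where "m1 = measure lebesgue (ball (0::real^'n) 1)"
  define A where "A = ball (0::real^'n) R2 - ball 0 R1"
  define Out where "Out = ball (0::real^'n) R1 \<union> (ball 0 1 - ball 0 R2)"
  define c' where "c' = max c (1/2)"
  define mA where "mA = measure lebesgue A"
  have c'1: "0 < c'" "c' < 1" "c \<le> c'" using c by (auto simp: c'_def)
  have mball: "measure lebesgue (ball (0::real^'n) r) = r^CARD('n) * m1" if "r \<ge> 0" for r
    unfolding m1_def using content_ball_conv_unit_ball[of r "0::real^'n"] that by simp
  have m1pos: "m1 > 0" unfolding m1_def using content_ball_pos[of 1 "0::real^'n"] by simp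
  have sub12: "ball (0::real^'n) R1 \<subseteq> ball 0 R2" using R by auto
  have mAeq: "mA = (R2^CARD('n) - R1^CARD('n)) * m1"
  proof -
    have fin: "emeasure lebesgue (ball (0::real^'n) R2) \<noteq> \<infinity>"
      using lmeasurable_ball[of "0::real^'n" R2] unfolding fmeasurable_def by auto
    have "measure lebesgue (ball (0::real^'n) R2 - ball 0 R1) = measure lebesgue (ball (0::real^'n) R2) - measure lebesgue (ball (0::real^'n) R1)"
      by (rule measure_Diff[OF fin]) (use sub12 in auto)
    thus ?thesis unfolding mA_def A_def using mball[of R1] mball[of R2] R by (simp add: algebra_simps)
  qed
  have "R1^CARD('n) < R2^CARD('n)"
    using R by (intro power_strict_mono) auto
  hence mApos: "mA > 0" using mAeq m1pos by simp
  have Asets: "A \<in> sets lebesgue" "Out \<in> sets lebesgue" unfolding A_def Out_def by auto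
  have AOdisj: "A \<inter> Out = {}" unfolding A_def Out_def by auto
  have AOun: "A \<union> Out = ball 0 1" unfolding A_def Out_def using R by auto
  have Osub: "Out \<subseteq> ball 0 1" using AOun by auto
  have mO: "measure lebesgue Out \<le> m1" unfolding m1_def
    by (rule measure_mono_fmeasurable) (use Osub Asets in auto)
  have Ofin: "emeasure lebesgue Out < \<infinity>"
  proof -
    have "emeasure lebesgue (ball (0::real^'n) 1) < \<infinity>"
      using lmeasurable_ball[of "0::real^'n" 1] unfolding fmeasurable_def by auto
    thus ?thesis using emeasure_mono[OF Osub, of lebesgue] by (simp add: le_less_trans)
  qed
  have key: "m1 * (1 - c' powr (p+1)) \<le> set_lebesgue_integral lebesgue A (\<lambda>x. \<bar>u p x\<bar> powr (p + 1))
      \<and> set_lebesgue_integral lebesgue A (\<lambda>x. \<bar>u p x\<bar> powr (p + 1)) \<le> m1" if p: "p > 1" for p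
  proof -
    define f where "f = (\<lambda>x. \<bar>u p x\<bar> powr (p + 1))"
    have K: "u p \<in> Kp R1 R2 c p" using u p by auto
    hence int1: "set_integrable lebesgue (ball 0 1) f"
      and norm1: "(set_lebesgue_integral lebesgue (ball 0 1) f / m1) powr (1 / (p + 1)) = 1"
      and bnd: "AE x in lebesgue. x \<in> Out \<longrightarrow> \<bar>u p x\<bar> \<le> c"
      unfolding Kp_def f_def m1_def Out_def by auto
    have nonneg: "0 \<le> set_lebesgue_integral lebesgue S f" for S
      unfolding set_lebesgue_integral_def f_def by (rule integral_nonneg_AE) (auto simp: indicator_def)
    define I where "I = set_lebesgue_integral lebesgue (ball 0 1) f"
    have "I / m1 \<noteq> 0" using norm1 unfolding I_def[symmetric] by auto
    moreover have "I / m1 \<ge> 0" using nonneg m1pos unfolding I_def by simp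
    ultimately have pos: "I / m1 > 0" by linarith
    have e: "(I/m1) powr (1/(p+1)) = 1" using norm1 unfolding I_def .
    have "I/m1 = ((I/m1) powr (1/(p+1))) powr (p+1)" using pos p m1pos by (simp add: powr_powr zero_less_divide_iff)
    hence "I / m1 = 1" using e by simp
    hence Ieq: "I = m1" using m1pos by simp
    have intA: "set_integrable lebesgue A f"
      by (rule set_integrable_subset[OF int1]) (use Asets AOun in auto)
    have intO: "set_integrable lebesgue Out f"
      by (rule set_integrable_subset[OF int1]) (use Asets Osub in auto)
    have split: "I = set_lebesgue_integral lebesgue A f + set_lebesgue_integral lebesgue Out f"
      unfolding I_def AOun[symmetric] by (rule set_integral_Un[OF AOdisj intA intO])
    have intc: "set_integrable lebesgue Out (\<lambda>_. c' powr (p+1))"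
      unfolding set_integrable_def using Asets Ofin by simp
    have "set_lebesgue_integral lebesgue Out f \<le> set_lebesgue_integral lebesgue Out (\<lambda>_. c' powr (p+1))"
    proof (rule set_integral_mono_AE[OF intO intc])
      show "AE x\<in>Out in lebesgue. f x \<le> c' powr (p + 1)"
        using bnd
      proof (rule AE_mp)
        show "AE x in lebesgue. (x \<in> Out \<longrightarrow> \<bar>u p x\<bar> \<le> c) \<longrightarrow> x \<in> Out \<longrightarrow> f x \<le> c' powr (p + 1)"
          using p c'1 by (auto simp: f_def intro!: powr_mono2)
      qed
    qed
    also have "\<dots> = measure lebesgue Out * c' powr (p+1)"
      using Asets Ofin by (simp add: set_integral_const)
    also have "\<dots> \<le> m1 * c' powr (p+1)"
      using mO by (intro mult_right_mono) auto
    finally show ?thesis using split Ieq nonneg[of A] nonneg[of Out] unfolding f_def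
      by (simp add: algebra_simps)
  qed
  define g1 where "g1 = (\<lambda>p::real. (m1 * (1 - c' powr (p+1)) / mA) powr (1 / (p+1)))"
  define g2 where "g2 = (\<lambda>p::real. (m1 / mA) powr (1 / (p+1)))"
  have lim0: "((\<lambda>p::real. 1 / (p+1)) \<longlongrightarrow> 0) at_top" by real_asymp
  have limc: "((\<lambda>p::real. c' powr (p+1)) \<longlongrightarrow> 0) at_top" using c'1 by real_asymp
  have "((\<lambda>p. m1 * (1 - c' powr (p+1)) / mA) \<longlongrightarrow> m1 * (1 - 0) / mA) at_top"
    by (intro tendsto_intros limc) (use mApos in auto)
  hence "(g1 \<longlongrightarrow> (m1 * (1 - 0) / mA) powr 0) at_top"
    unfolding g1_def by (rule tendsto_powr[OF _ lim0]) (use m1pos mApos in auto)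
  hence l1: "(g1 \<longlongrightarrow> 1) at_top" using m1pos mApos by simp
  have "(g2 \<longlongrightarrow> (m1 / mA) powr 0) at_top"
    unfolding g2_def by (rule tendsto_powr[OF _ lim0]) (use m1pos mApos in auto)
  hence l2: "(g2 \<longlongrightarrow> 1) at_top" using m1pos mApos by simp
  show ?thesis
  proof (rule tendsto_sandwich[OF _ _ l1 l2])
    show "\<forall>\<^sub>F p in at_top. g1 p \<le> (set_lebesgue_integral lebesgue (ball 0 R2 - ball 0 R1) (\<lambda>x. \<bar>u p x\<bar> powr (p + 1))
               / measure lebesgue (ball (0::real^'n) R2 - ball 0 R1)) powr (1 / (p + 1))"
      using eventually_gt_at_top[of 1]
    proof (rule eventually_mono)
      fix p :: real assume p: "p > 1"
      have "c' powr (p+1) < 1" using powr_less_mono2[of "p+1" c' 1] c'1 p by simp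
      thus "g1 p \<le> (set_lebesgue_integral lebesgue (ball 0 R2 - ball 0 R1) (\<lambda>x. \<bar>u p x\<bar> powr (p + 1))
               / measure lebesgue (ball (0::real^'n) R2 - ball 0 R1)) powr (1 / (p + 1))"
        unfolding g1_def A_def[symmetric] mA_def[symmetric]
        using key[OF p] p m1pos mApos
        by (intro powr_mono2 divide_right_mono) auto
    qed
    show "\<forall>\<^sub>F p in at_top. (set_lebesgue_integral lebesgue (ball 0 R2 - ball 0 R1) (\<lambda>x. \<bar>u p x\<bar> powr (p + 1))
               / measure lebesgue (ball (0::real^'n) R2 - ball 0 R1)) powr (1 / (p + 1)) \<le> g2 p"
      using eventually_gt_at_top[of 1]
    proof (rule eventually_mono)
      fix p :: real assume p: "p > 1"
      have "c' powr (p+1) < 1" using powr_less_mono2[of "p+1" c' 1] c'1 p by simp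
      thus "(set_lebesgue_integral lebesgue (ball 0 R2 - ball 0 R1) (\<lambda>x. \<bar>u p x\<bar> powr (p + 1))
               / measure lebesgue (ball (0::real^'n) R2 - ball 0 R1)) powr (1 / (p + 1)) \<le> g2 p"
        unfolding g2_def A_def[symmetric] mA_def[symmetric]
      proof (intro powr_mono2 divide_right_mono)
        have "0 \<le> m1 * (1 - c' powr (p+1))" using m1pos \<open>c' powr (p+1) < 1\<close> by simp
        hence "0 \<le> set_lebesgue_integral lebesgue A (\<lambda>x. \<bar>u p x\<bar> powr (p + 1))"
          using key[OF p] by linarith
        thus "0 \<le> set_lebesgue_integral lebesgue A (\<lambda>x. \<bar>u p x\<bar> powr (p + 1)) / mA"
          using mApos by simp
      qed (use key[OF p] p mApos in auto)
    qed
  qed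
qed

end
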